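(* Let $q$ be a power of an odd prime, let $n$ be an even positive integer, and let $k$ be a divisor of $q-1$. Then $(q^n,k)$ does not give a $3$-design.
   Context: For a prime power $Q\equiv1\pmod 4$ (note $q^n\equiv 1\pmod 4$ here) the group $\mathrm{PSL}(2,Q)$ acts on $\mathrm{PG}(1,Q)=\mathbb{F}_Q\cup\{\infty\}$ by linear fractional transformations $z\mapsto (az+b)/(cz+d)$ with $ad-bc$ a nonzero square in $\mathbb{F}_Q$. For a divisor $k$ of $Q-1$, "$(Q,k)$ gives a $3$-design" means that the $\mathrm{PSL}(2,Q)$-orbit of the unique subgroup of order $k$ of $\mathbb{F}_Q^\times$ is the block set of a $3$-$(Q+1,k,\lambda)$ design for some positive integer $\lambda$. *)

theory Defs
  imports Main "HOL-Computational_Algebra.Primes"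
begin

text \<open>The projective line PG(1,F) over a field F is modelled as the type 'a option:
  Some z is the affine point z, None is the point at infinity.\<close>

definition lft :: "'a::field \<Rightarrow> 'a \<Rightarrow> 'a \<Rightarrow> 'a \<Rightarrow> 'a option \<Rightarrow> 'a option" where
  "lft a b c d z = (case z of
      None \<Rightarrow> (if c = 0 then None else Some (a / c))
    | Some x \<Rightarrow> (if c * x + d = 0 then None else Some ((a * x + b) / (c * x + d))))"

definition PSL2 :: "('a::field option \<Rightarrow> 'a option) set" where
  "PSL2 = {lft a b c d | a b c d. \<exists>s. s \<noteq> 0 \<and> a * d - b * c = s ^ 2}"

text \<open>The subgroup of order k of the multiplicative group (for k dividing |F|-1),
  viewed as a set of points of the projective line.\<close>
definition base_block :: "nat \<Rightarrow> 'a::field option set" where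
  "base_block k = Some ` {x. x ^ k = 1}"

definition design_blocks :: "nat \<Rightarrow> 'a::field option set set" where
  "design_blocks k = (\<lambda>g. g ` base_block k) ` PSL2"

definition gives_3_design :: "'a::{finite,field} itself \<Rightarrow> nat \<Rightarrow> bool" where
  "gives_3_design _ k \<longleftrightarrow>
     (\<exists>lam::nat. lam > 0 \<and>
        (\<forall>T :: 'a option set. card T = 3 \<longrightarrow>
            card {B \<in> (design_blocks k :: 'a option set set). T \<subseteq> B} = lam))"

end

theory Submission
  imports Defs "HOL-Number_Theory.Number_Theory" "HOL-Computational_Algebra.Polynomial"
begin

lemma fermat_ff:
  fixes x :: "'a::{finite,field}"
  assumes "x \<noteq> 0"
  shows "x ^ (card (UNIV :: 'a set) - 1) = 1"
proof -
  have "(\<Prod>y\<in>UNIV-{0}. x * y) = x ^ (card (UNIV :: 'a set) - 1) * \<Prod>(UNIV-{0})"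
    by (simp add: prod.distrib mult_ac)
  also have "(\<Prod>y\<in>UNIV-{0}. x * y) = (\<Prod>y\<in>UNIV-{0}. y)"
    by (rule prod.reindex_bij_witness[of _ "\<lambda>y. y / x" "\<lambda>y. x * y"]) (use assms in auto)
  finally have "1 * \<Prod>(UNIV-{0::'a}) = x ^ (card (UNIV :: 'a set) - 1) * \<Prod>(UNIV-{0})" by simp
  moreover have "\<Prod>(UNIV-{0::'a}) \<noteq> 0" by (simp add: prod_zero_iff)
  ultimately show ?thesis by (metis mult_right_cancel)
qed

lemma char_is_p:
  fixes F :: "'a::{finite,field} itself"
  assumes "prime p" "card (UNIV :: 'a set) = p ^ N"
  shows "CHAR('a) = p"
proof -
  have pos: "CHAR('a) > 0" by (rule finite_imp_CHAR_pos) simp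
  have pr: "prime CHAR('a)" using prime_CHAR_semidom[OF pos] .
  have "CHAR('a) dvd p ^ N" using CHAR_dvd_CARD[where 'a='a] assms(2) by simp
  hence "CHAR('a) dvd p" using pr prime_dvd_power by blast
  thus ?thesis using pr assms(1) primes_dvd_imp_eq by blast
qed

lemma frob_diff:
  fixes x y :: "'a::{finite,field}"
  assumes "prime p" "odd p" "CHAR('a) = p"
  shows "(x - y) ^ (p ^ m) = x ^ (p ^ m) - y ^ (p ^ m)"
proof -
  have "(x + (-y)) ^ (p ^ m) = x ^ (p ^ m) + (-y) ^ (p ^ m)"
    by (rule freshmans_dream') (use assms in auto)
  moreover have "odd (p ^ m)" using assms by simp
  ultimately show ?thesis by simp
qed

lemma dvd_pow_minus1:
  fixes x :: nat
  shows "(x - 1) dvd (x ^ j - 1)"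
proof (cases "x = 0")
  case True then show ?thesis by (cases j) auto
next
  case False
  have xe: "x = 1 + (x - 1)" using False by simp
  have "[x = 1] (mod (x - 1))" unfolding cong_def by (subst xe) (simp only: mod_add_self2)
  hence "[x ^ j = 1 ^ j] (mod (x - 1))" by (rule cong_pow)
  thus ?thesis using cong_to_1_nat by simp
qed
theorem proposition3p5:
  fixes p m n k :: nat and F :: "'a::{finite,field} itself"
  assumes "prime p" and "odd p" and "m > 0"
    and "n > 0" and "even n"
    and "k dvd p ^ m - 1"
    and "card (UNIV :: 'a set) = (p ^ m) ^ n"
  shows "\<not> gives_3_design F k"
proof
  assume des: "gives_3_design F k"
  define q where "q = p ^ m"
  define Q where "Q = card (UNIV :: 'a set)"
  define e where "e = (Q - 1) div 2"
  have p2': "p \<ge> 2" using assms(1) prime_ge_2_nat by blast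
  have "p \<noteq> 2" using assms(2) by auto
  hence p2: "p \<ge> 3" using p2' by linarith
  have q3: "q \<ge> 3" unfolding q_def using p2 assms(3) self_le_power[of p m] by linarith
  have Qdef: "Q = q ^ n" using assms(7) by (simp add: Q_def q_def)
  have oddQ: "odd Q" unfolding Qdef q_def using assms(2) by simp
  have Qq: "Q \<ge> q" unfolding Qdef using assms(4) q3
    by (simp add: self_le_power)
  have e_pos: "e > 0" unfolding e_def using Qq q3 by simp
  have Qe: "Q - 1 = 2 * e" unfolding e_def using oddQ by simp
  have char: "CHAR('a) = p"
    using char_is_p[OF assms(1), of "m * n"] assms(7) by (simp add: power_mult Q_def)
  have qe: "(q - 1) dvd e"
  proof -
    obtain j where j: "n = 2 * j" using assms(5) by blast
    have "(q^2 - 1) dvd ((q^2) ^ j - 1)" by (rule dvd_pow_minus1)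
    hence d1: "(q^2 - 1) dvd (Q - 1)" using j Qdef by (simp add: power_mult)
    have e1: "q^2 - 1 = (q - 1) * (q + 1)" using q3
      by (simp add: power2_eq_square algebra_simps)
    have "odd q" using assms(2) q_def by simp
    then obtain r where r: "q + 1 = 2 * r" by (metis evenE odd_Suc_div_two Suc_eq_plus1 dvd_mult_div_cancel even_Suc)
    have "q^2 - 1 = (2 * (q - 1)) * r" unfolding e1 r by simp
    hence "2 * (q - 1) dvd (q^2 - 1)" by (simp only: dvd_triv_left)
    hence "2 * (q - 1) dvd (Q - 1)" using d1 by (rule dvd_trans)
    thus ?thesis using Qe by simp
  qed
  have sub: "z ^ e = 1" if "z \<noteq> 0" "z ^ q = z" for z :: 'a
  proof -
    have "z ^ (q - 1) = 1"
    proof -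
      have qs: "q = Suc (q - 1)" using q3 by simp
      have "z * z ^ (q - 1) = z * 1"
        using that(2) by (subst (asm) qs) simp
      thus ?thesis using that(1) by simp
    qed
    moreover obtain t where "e = (q - 1) * t" using qe by blast
    ultimately show ?thesis by (simp add: power_mult)
  qed
  have rootq: "x ^ q = x" if "x ^ k = 1" for x :: 'a
  proof -
    obtain t where "q - 1 = k * t" using assms(6) q_def by blast
    hence "x ^ (q - 1) = 1" using that by (simp add: power_mult)
    hence "x ^ Suc (q - 1) = x" by simp
    moreover have "Suc (q - 1) = q" using q3 by simp
    ultimately show ?thesis by simp
  qed
  have diffsq: "(x - y) ^ e = 1" if "x ^ k = 1" "y ^ k = 1" "x \<noteq> y" for x y :: 'a
  proof -
    have "(x - y) ^ q = x ^ q - y ^ q" unfolding q_def by (rule frob_diff) (use assms char in auto)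
    also have "\<dots> = x - y" using rootq that by simp
    finally show ?thesis using sub that(3) by simp
  qed
  have sqe: "(s ^ 2) ^ e = 1" if "s \<noteq> 0" for s :: 'a
    using fermat_ff[OF that] Qe Q_def by (simp add: power_mult[symmetric])
  obtain \<nu> :: 'a where nu0: "\<nu> \<noteq> 0" and nu1: "\<nu> ^ e \<noteq> 1"
  proof -
    let ?P = "monom (1::'a) e - 1"
    have degP: "degree ?P \<le> e" by (rule degree_diff_le) (auto simp: degree_monom_le)
    have "poly ?P 0 \<noteq> 0" using e_pos by (simp add: poly_monom power_0_left)
    hence "?P \<noteq> 0" by auto
    hence cb: "card {x. poly ?P x = 0} \<le> e" using card_poly_roots_bound[of ?P] degP by simp
    have "\<not> (UNIV - {0::'a}) \<subseteq> {x. poly ?P x = 0}"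
    proof
      assume "(UNIV - {0::'a}) \<subseteq> {x. poly ?P x = 0}"
      hence "card (UNIV - {0::'a}) \<le> card {x. poly ?P x = 0}" by (intro card_mono) auto
      moreover have "card (UNIV - {0::'a}) = Q - 1" by (simp add: Q_def)
      ultimately show False using cb Qe e_pos by simp
    qed
    then obtain x :: 'a where "x \<noteq> 0" "x ^ e \<noteq> 1" by (auto simp: poly_monom)
    thus thesis using that by blast
  qed
  obtain lam where lam: "lam > 0"
    "\<And>T :: 'a option set. card T = 3 \<Longrightarrow> card {B \<in> (design_blocks k :: 'a option set set). T \<subseteq> B} = lam"
    using des unfolding gives_3_design_def by blast
  define T where "T = {None, Some 0, Some \<nu>}"
  have cT: "card T = 3" using nu0 by (simp add: T_def)
  have empty: "{B \<in> (design_blocks k :: 'a option set set). T \<subseteq> B} = {}"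
  proof (rule ccontr)
    assume "{B \<in> (design_blocks k :: 'a option set set). T \<subseteq> B} \<noteq> {}"
    then obtain a b c d s where s: "s \<noteq> 0" "a * d - b * c = s ^ 2"
      and sub: "T \<subseteq> lft a b c d ` base_block k"
      unfolding design_blocks_def PSL2_def by blast
    from sub obtain x1 where x1: "x1 ^ k = 1" "lft a b c d (Some x1) = None"
      unfolding T_def base_block_def by auto
    from sub obtain x2 where x2: "x2 ^ k = 1" "lft a b c d (Some x2) = Some 0"
      unfolding T_def base_block_def by auto
    from sub obtain x3 where x3: "x3 ^ k = 1" "lft a b c d (Some x3) = Some \<nu>"
      unfolding T_def base_block_def by auto
    have h1: "c * x1 + d = 0" using x1(2) by (auto simp: lft_def split: if_splits)
    have h2: "c * x2 + d \<noteq> 0" "a * x2 + b = 0" using x2(2) by (auto simp: lft_def split: if_splits)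
    have h3: "c * x3 + d \<noteq> 0" "(a * x3 + b) / (c * x3 + d) = \<nu>"
      using x3(2) by (auto simp: lft_def split: if_splits)
    have dd: "d = - c * x1" using h1 by (simp add: algebra_simps eq_neg_iff_add_eq_0)
    have bb: "b = - a * x2" using h2 by (simp add: algebra_simps eq_neg_iff_add_eq_0)
    have det: "a * c * (x2 - x1) = s ^ 2" using s(2) dd bb by (simp add: algebra_simps)
    have c0: "c \<noteq> 0" using h3(1) dd by auto
    have d31: "x3 - x1 \<noteq> 0" using h3(1) dd by (auto simp: algebra_simps)
    have d21: "x2 - x1 \<noteq> 0" using det s(1) by auto
    have nu: "\<nu> = a * (x3 - x2) / (c * (x3 - x1))"
      using h3(2) dd bb by (simp add: algebra_simps)
    have d32: "x3 - x2 \<noteq> 0" using nu nu0 by auto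
    have a0: "a \<noteq> 0" using nu nu0 by auto
    have nm: "\<nu> * (c * (x3 - x1)) = a * (x3 - x2)" using nu c0 d31 by simp
    have "\<nu> * ((c ^ 2) * (x2 - x1) * (x3 - x1)) = (\<nu> * (c * (x3 - x1))) * (c * (x2 - x1))"
      by (simp add: power2_eq_square algebra_simps)
    also have "\<dots> = (a * c * (x2 - x1)) * (x3 - x2)" unfolding nm by (simp add: algebra_simps)
    also have "\<dots> = s ^ 2 * (x3 - x2)" using det by simp
    finally have "\<nu> * ((c ^ 2) * (x2 - x1) * (x3 - x1)) = s ^ 2 * (x3 - x2)" .
    hence nu2: "\<nu> = s ^ 2 * (x3 - x2) / ((c ^ 2) * (x2 - x1) * (x3 - x1))"
      using c0 d21 d31 by (simp add: eq_divide_eq)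
    have "\<nu> ^ e = (s ^ 2) ^ e * (x3 - x2) ^ e / ((c ^ 2) ^ e * (x2 - x1) ^ e * (x3 - x1) ^ e)"
      unfolding nu2 by (simp add: power_divide power_mult_distrib)
    also have "\<dots> = 1"
      using sqe[OF s(1)] sqe[OF c0] diffsq x1(1) x2(1) x3(1) d21 d31 d32 by simp
    finally show False using nu1 by simp
  qed
  show False using lam(1) lam(2)[OF cT] empty by simp
qed

end
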